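(* Assume the standing setting described in the context. Then the rate function $V:\Theta\to\mathbb{R}$ is lower semicontinuous, and hence the set $\Theta_{\min}=\operatorname{argmin}_{\theta\in\Theta}V(\theta)$ is non-empty and compact.
   Context: Observed system: $\mathcal{Y}$ is a complete separable metric space, $T$ is Borel, and $\nu$ is $T$-invariant and ergodic. Model system: $\mathcal{X}$ is a mixing shift of finite type over a finite alphabet (sequences avoiding a finite set of forbidden words, such that any two occurring words $u,v$ can be joined as $uwv$ with occurring $w$ of every sufficiently large length), with left shift $(Sx)_i=x_{i+1}$ and metric $d_{\mathcal{X}}(x,y)=2^{-\inf\{|m|:x_m\ne y_m\}}$. Parameter family: $\Theta$ is a compact metric space with metric $d_\Theta$. $\{f_\theta\}$ is a regular family: for some $r>0$, all $f_\theta$ are $r$-Hölder and $\theta\mapsto f_\theta$ is continuous in the norm $\|f\|_r=\sup|f|+\sup_{x\ne y}|f(x)-f(y)|/d_{\mathcal{X}}(x,y)^r$. $\mu_\theta$ is the Gibbs measure of $f_\theta$ and $\mathcal{P}(f_\theta)=\sup\{\int f_\theta d\mu+h(\mu)\}$ is the pressure, the supremum over $S$-invariant $\mu$. Loss: $\ell:\Theta\times\mathcal{X}\times\mathcal{Y}\to\mathbb{R}$ satisfies the following. - (i) $\ell$ is continuous. - (ii) $\sup_{\theta,x}|\ell(\theta,x,y)|\le\ell^*(y)$ with $\ell^*$ measurable and $\nu$-integrable. - (iii) For each $\delta>0$ there is a measurable $\rho_\delta>0$ with $|\ell(\theta,x,y)-\ell(\theta',x',y)|\le\rho_\delta(y)$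 whenever $\max(d_\Theta(\theta,\theta'),d_{\mathcal{X}}(x,x'))\le\delta$, and $\int\rho_\delta d\nu\to0$ as $\delta\to0^+$. Rate function: $\mathcal{J}(S:\nu)$ is the set of $S\times T$-invariant Borel probability measures on $\mathcal{X}\times\mathcal{Y}$ with $\mathcal{Y}$-marginal $\nu$, disintegrated as $\lambda=\int\lambda_y\otimes\delta_y d\nu$. The fiber entropy is $h^\nu(\lambda)=\sup_\alpha\lim_n\frac1n\int H(\lambda_y,\bigvee_{k<n}S^{-k}\alpha)d\nu(y)$, the supremum over finite measurable partitions $\alpha$, with $H(\eta,\alpha)=-\sum_C\eta(C)\log\eta(C)$. Then \[ V(\theta)=\inf\Bigl\{\int\ell(\theta,x,y)d\lambda+\mathcal{P}(f_\theta)-h^\nu(\lambda)-\int f_\theta(x)\,d\lambda:\lambda\in\mathcal{J}(S:\nu)\Bigr\}. \] *)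

theory Defs
  imports "HOL-Probability.Probability"
begin

definition occurs_at :: "(int \<Rightarrow> 'a) \<Rightarrow> int \<Rightarrow> 'a list \<Rightarrow> bool" where
  "occurs_at x i w \<longleftrightarrow> (\<forall>k<length w. x (i + int k) = w ! k)"

definition sft :: "'a list set \<Rightarrow> (int \<Rightarrow> 'a) set" where
  "sft F = {x. \<forall>i. \<forall>w\<in>F. \<not> occurs_at x i w}"

definition occurring_word :: "(int \<Rightarrow> 'a) set \<Rightarrow> 'a list \<Rightarrow> bool" where
  "occurring_word X w \<longleftrightarrow> (\<exists>x\<in>X. \<exists>i. occurs_at x i w)"

definition mixing_sft :: "(int \<Rightarrow> 'a::finite) set \<Rightarrow> bool" where
  "mixing_sft X \<longleftrightarrow> (\<exists>F. finite F \<and> X = sft F) \<and>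
     (\<exists>N. \<forall>u v. occurring_word X u \<and> occurring_word X v \<longrightarrow>
        (\<forall>n\<ge>N. \<exists>w. length w = n \<and> occurring_word X (u @ w @ v)))"

definition shift :: "(int \<Rightarrow> 'a) \<Rightarrow> (int \<Rightarrow> 'a)" where
  "shift x = (\<lambda>i. x (i + 1))"

definition dX :: "(int \<Rightarrow> 'a) \<Rightarrow> (int \<Rightarrow> 'a) \<Rightarrow> real" where
  "dX x y = (if x = y then 0
     else (1/2) ^ (LEAST n::nat. x (int n) \<noteq> y (int n) \<or> x (- int n) \<noteq> y (- int n)))"

definition dX_open_in :: "(int \<Rightarrow> 'a) set \<Rightarrow> (int \<Rightarrow> 'a) set \<Rightarrow> bool" where
  "dX_open_in X U \<longleftrightarrow> U \<subseteq> X \<and> (\<forall>x\<in>U. \<exists>e>0. \<forall>y\<in>X. dX x y < e \<longrightarrow> y \<in> U)"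

definition borelX :: "(int \<Rightarrow> 'a) set \<Rightarrow> (int \<Rightarrow> 'a) measure" where
  "borelX X = sigma X {U. dX_open_in X U}"

definition holder_on :: "real \<Rightarrow> (int \<Rightarrow> 'a) set \<Rightarrow> ((int \<Rightarrow> 'a) \<Rightarrow> real) \<Rightarrow> bool" where
  "holder_on r X f \<longleftrightarrow> (\<exists>C. \<forall>x\<in>X. \<forall>y\<in>X. \<bar>f x - f y\<bar> \<le> C * dX x y powr r)"

definition holder_norm :: "real \<Rightarrow> (int \<Rightarrow> 'a) set \<Rightarrow> ((int \<Rightarrow> 'a) \<Rightarrow> real) \<Rightarrow> real" where
  "holder_norm r X f = (SUP x\<in>X. \<bar>f x\<bar>)
     + (SUP p\<in>{(x,y). x \<in> X \<and> y \<in> X \<and> x \<noteq> y}. \<bar>f (fst p) - f (snd p)\<bar> / dX (fst p) (snd p) powr r)"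

definition regular_family ::
  "'c::metric_space set \<Rightarrow> (int \<Rightarrow> 'a) set \<Rightarrow> ('c \<Rightarrow> (int \<Rightarrow> 'a) \<Rightarrow> real) \<Rightarrow> bool" where
  "regular_family \<Theta> X f \<longleftrightarrow> (\<exists>r>0. (\<forall>\<theta>\<in>\<Theta>. holder_on r X (f \<theta>)) \<and>
     (\<forall>\<theta>\<in>\<Theta>. \<forall>\<epsilon>>0. \<exists>\<delta>>0. \<forall>\<theta>'\<in>\<Theta>. dist \<theta>' \<theta> < \<delta> \<longrightarrow>
        holder_norm r X (\<lambda>x. f \<theta>' x - f \<theta> x) < \<epsilon>))"

definition finite_partition :: "'x measure \<Rightarrow> 'x set set \<Rightarrow> bool" where
  "finite_partition M \<alpha> \<longleftrightarrow> finite \<alpha> \<and> \<alpha> \<subseteq> sets M \<and> disjoint \<alpha> \<and> \<Union>\<alpha> = space M"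

text \<open>The cell of the refinement alpha v S^{-1} alpha v ... v S^{-(n-1)} alpha
  indexed by the word cs (of length n) of cells of alpha.\<close>
definition refine_cell :: "'x set \<Rightarrow> ('x \<Rightarrow> 'x) \<Rightarrow> 'x set list \<Rightarrow> 'x set" where
  "refine_cell A S cs = {x \<in> A. \<forall>k<length cs. (S ^^ k) x \<in> cs ! k}"

definition refined_entropy :: "'x measure \<Rightarrow> ('x \<Rightarrow> 'x) \<Rightarrow> 'x set set \<Rightarrow> nat \<Rightarrow> real" where
  "refined_entropy \<eta> S \<alpha> n =
     - (\<Sum>cs\<in>{cs. set cs \<subseteq> \<alpha> \<and> length cs = n}.
          measure \<eta> (refine_cell (space \<eta>) S cs) * ln (measure \<eta> (refine_cell (space \<eta>) S cs)))"

definition ks_entropy :: "'x measure \<Rightarrow> ('x \<Rightarrow> 'x) \<Rightarrow> real" where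
  "ks_entropy \<mu> S = (SUP \<alpha>\<in>{\<alpha>. finite_partition \<mu> \<alpha>}.
      lim (\<lambda>n. refined_entropy \<mu> S \<alpha> n / real n))"

definition invariant_prob :: "'x measure \<Rightarrow> ('x \<Rightarrow> 'x) \<Rightarrow> 'x measure set" where
  "invariant_prob M S = {\<mu>. prob_space \<mu> \<and> sets \<mu> = sets M \<and> distr \<mu> M S = \<mu>}"

text \<open>Topological pressure via the variational principle (as in the paper).\<close>
definition pressure :: "(int \<Rightarrow> 'a) set \<Rightarrow> ((int \<Rightarrow> 'a) \<Rightarrow> real) \<Rightarrow> real" where
  "pressure X f = (SUP \<mu>\<in>invariant_prob (borelX X) shift.
      (\<integral>x. f x \<partial>\<mu>) + ks_entropy \<mu> shift)"

text \<open>kappa is a disintegration of lambda (a measure on X x Y with Y-marginal nu):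
  lambda = integral of kappa_y \<otimes> delta_y d nu(y).\<close>
definition disintegration ::
  "'x measure \<Rightarrow> 'y measure \<Rightarrow> ('x \<times> 'y) measure \<Rightarrow> ('y \<Rightarrow> 'x measure) \<Rightarrow> bool" where
  "disintegration MX \<nu> L \<kappa> \<longleftrightarrow>
     (\<forall>y. prob_space (\<kappa> y) \<and> sets (\<kappa> y) = sets MX) \<and>
     (\<forall>A\<in>sets MX. (\<lambda>y. emeasure (\<kappa> y) A) \<in> borel_measurable \<nu>) \<and>
     (\<forall>C\<in>sets (MX \<Otimes>\<^sub>M \<nu>).
        emeasure L C = (\<integral>\<^sup>+ y. emeasure (\<kappa> y) ((\<lambda>x. (x, y)) -` C \<inter> space MX) \<partial>\<nu>))"

definition joinings ::
  "(int \<Rightarrow> 'a) set \<Rightarrow> ('y \<Rightarrow> 'y) \<Rightarrow> 'y measure \<Rightarrow> ((int \<Rightarrow> 'a) \<times> 'y) measure set" where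
  "joinings X T \<nu> = {L. prob_space L \<and> sets L = sets (borelX X \<Otimes>\<^sub>M \<nu>) \<and>
      distr L (borelX X \<Otimes>\<^sub>M \<nu>) (\<lambda>(x, y). (shift x, T y)) = L \<and>
      distr L \<nu> snd = \<nu>}"

text \<open>Fiber entropy h^nu(lambda), computed from (a choice of) the disintegration,
  which is unique nu-almost everywhere.\<close>
definition fiber_entropy ::
  "(int \<Rightarrow> 'a) set \<Rightarrow> 'y measure \<Rightarrow> ((int \<Rightarrow> 'a) \<times> 'y) measure \<Rightarrow> real" where
  "fiber_entropy X \<nu> L =
     (let \<kappa> = (SOME \<kappa>. disintegration (borelX X) \<nu> L \<kappa>) in
       (SUP \<alpha>\<in>{\<alpha>. finite_partition (borelX X) \<alpha>}.
          lim (\<lambda>n. (\<integral>y. refined_entropy (\<kappa> y) shift \<alpha> n \<partial>\<nu>) / real n)))"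

definition rate_fun ::
  "(int \<Rightarrow> 'a) set \<Rightarrow> ('y \<Rightarrow> 'y) \<Rightarrow> 'y measure \<Rightarrow> ('c \<Rightarrow> (int \<Rightarrow> 'a) \<Rightarrow> real)
   \<Rightarrow> ('c \<Rightarrow> (int \<Rightarrow> 'a) \<Rightarrow> 'y \<Rightarrow> real) \<Rightarrow> 'c \<Rightarrow> real" where
  "rate_fun X T \<nu> f loss \<theta> = (INF L\<in>joinings X T \<nu>.
      (\<integral>p. loss \<theta> (fst p) (snd p) \<partial>L) + pressure X (f \<theta>) - fiber_entropy X \<nu> L
      - (\<integral>p. f \<theta> (fst p) \<partial>L))"

definition ergodic_mp :: "'y measure \<Rightarrow> ('y \<Rightarrow> 'y) \<Rightarrow> bool" where
  "ergodic_mp \<nu> T \<longleftrightarrow> T \<in> measurable \<nu> \<nu> \<and> distr \<nu> \<nu> T = \<nu> \<and>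
     (\<forall>A\<in>sets \<nu>. T -` A \<inter> space \<nu> = A \<longrightarrow> measure \<nu> A = 0 \<or> measure \<nu> A = 1)"

definition lsc_on :: "'c::topological_space set \<Rightarrow> ('c \<Rightarrow> real) \<Rightarrow> bool" where
  "lsc_on S g \<longleftrightarrow> (\<forall>a. openin (top_of_set S) {x \<in> S. a < g x})"

end

theory Submission
  imports Defs
begin

lemma space_borelX: "space (borelX X) = X"
  unfolding borelX_def by (simp add: space_measure_of_conv)

lemma sets_borelX_open: "dX_open_in X U \<Longrightarrow> U \<in> sets (borelX X)"
  unfolding borelX_def
  by (subst sets_measure_of) (auto simp: dX_open_in_def)

lemma dX_sym: "dX x y = dX y x"
  unfolding dX_def by (simp add: eq_commute)

lemma dX_nonneg: "0 \<le> dX x y"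
  unfolding dX_def by simp

lemma dX_le1: "dX x y \<le> 1"
  unfolding dX_def by (simp add: power_le_one)

lemma dX_self: "dX x x = 0"
  unfolding dX_def by simp

lemma dX_pos: "x \<noteq> y \<Longrightarrow> 0 < dX x y"
  unfolding dX_def by simp

lemma dX_ge:
  assumes "x i \<noteq> y i"
  shows "(1/2) ^ nat \<bar>i\<bar> \<le> dX x y"
proof -
  have ne: "x \<noteq> y" using assms by auto
  have P: "x (int (nat \<bar>i\<bar>)) \<noteq> y (int (nat \<bar>i\<bar>)) \<or> x (- int (nat \<bar>i\<bar>)) \<noteq> y (- int (nat \<bar>i\<bar>))"
    using assms by (cases "i \<ge> 0") auto
  have "(LEAST n::nat. x (int n) \<noteq> y (int n) \<or> x (- int n) \<noteq> y (- int n)) \<le> nat \<bar>i\<bar>"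
    by (rule Least_le) (rule P)
  then have "(1/2::real) ^ nat \<bar>i\<bar> \<le> (1/2) ^ (LEAST n::nat. x (int n) \<noteq> y (int n) \<or> x (- int n) \<noteq> y (- int n))"
    by (intro power_decreasing) auto
  then show ?thesis using ne unfolding dX_def by simp
qed

lemma dX_agree:
  assumes "\<forall>i. \<bar>i\<bar> \<le> int n \<longrightarrow> x i = y i"
  shows "dX x y \<le> (1/2) ^ Suc n"
proof (cases "x = y")
  case True then show ?thesis by (simp add: dX_self)
next
  case False
  then obtain i where i: "x i \<noteq> y i" by auto
  have P: "\<exists>m. x (int m) \<noteq> y (int m) \<or> x (- int m) \<noteq> y (- int m)"
    using i by (intro exI[of _ "nat \<bar>i\<bar>"]) (cases "i \<ge> 0", auto)
  define L where "L = (LEAST n::nat. x (int n) \<noteq> y (int n) \<or> x (- int n) \<noteq> y (- int n))"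
  have "x (int L) \<noteq> y (int L) \<or> x (- int L) \<noteq> y (- int L)"
    unfolding L_def by (rule LeastI_ex) (rule P)
  then have "L \<ge> Suc n" using assms by (cases "L \<le> n") auto
  then have "(1/2::real) ^ L \<le> (1/2) ^ Suc n" by (intro power_decreasing) auto
  then show ?thesis using False unfolding dX_def L_def by simp
qed

lemma cont_meas_borelX:
  fixes g :: "(int \<Rightarrow> 'a) \<Rightarrow> real"
  assumes c: "\<forall>x\<in>X. \<forall>e>0. \<exists>d>0. \<forall>y\<in>X. dX x y < d \<longrightarrow> \<bar>g y - g x\<bar> < e"
  shows "g \<in> borel_measurable (borelX X)"
  unfolding borel_measurable_iff_less
proof
  fix a
  have "dX_open_in X {w \<in> X. g w < a}"
    unfolding dX_open_in_def
  proof (intro conjI ballI)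
    fix x assume x: "x \<in> {w \<in> X. g w < a}"
    then have "x \<in> X" "a - g x > 0" by auto
    then obtain d where d: "d > 0" "\<forall>y\<in>X. dX x y < d \<longrightarrow> \<bar>g y - g x\<bar> < a - g x"
      using c by blast
    show "\<exists>e>0. \<forall>y\<in>X. dX x y < e \<longrightarrow> y \<in> {w \<in> X. g w < a}"
    proof (intro exI[of _ d] conjI ballI impI)
      fix y assume "y \<in> X" "dX x y < d"
      then have "\<bar>g y - g x\<bar> < a - g x" using d by blast
      then show "y \<in> {w \<in> X. g w < a}" using \<open>y \<in> X\<close> by simp
    qed (rule d(1))
  qed blast
  then show "{w \<in> space (borelX X). g w < a} \<in> sets (borelX X)"
    by (simp add: space_borelX sets_borelX_open)
qed

lemma cyl_open:
  "dX_open_in X {x\<in>X. restrict x {-int n..int n} = z}"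
  unfolding dX_open_in_def
proof (intro conjI ballI)
  fix x assume x: "x \<in> {x\<in>X. restrict x {-int n..int n} = z}"
  show "\<exists>e>0. \<forall>y\<in>X. dX x y < e \<longrightarrow> y \<in> {x\<in>X. restrict x {-int n..int n} = z}"
  proof (intro exI[of _ "(1/2)^n"] conjI ballI impI)
    fix y assume y: "y \<in> X" "dX x y < (1/2)^n"
    have "\<forall>i\<in>{-int n..int n}. x i = y i"
    proof (rule ccontr)
      assume "\<not> ?thesis"
      then obtain i where i: "i \<in> {-int n..int n}" "x i \<noteq> y i" by auto
      have "(1/2::real) ^ n \<le> (1/2) ^ nat \<bar>i\<bar>" using i(1) by (intro power_decreasing) auto
      also have "\<dots> \<le> dX x y" by (rule dX_ge) (rule i(2))
      finally show False using y by simp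
    qed
    then have "restrict y {-int n..int n} = restrict x {-int n..int n}"
      by (auto simp: restrict_def)
    then show "y \<in> {x\<in>X. restrict x {-int n..int n} = z}" using x y(1) by simp
  qed simp
qed blast

lemma prod_meas:
  fixes h :: "(int \<Rightarrow> 'a::finite) \<Rightarrow> 'y::metric_space \<Rightarrow> real"
  assumes N: "sets N = sets borel"
    and cy: "\<forall>x\<in>X. continuous_on UNIV (h x)"
    and cx: "\<forall>y. \<forall>x\<in>X. \<forall>e>0. \<exists>d>0. \<forall>x'\<in>X. dX x' x < d \<longrightarrow> \<bar>h x' y - h x y\<bar> < e"
  shows "(\<lambda>p. h (fst p) (snd p)) \<in> borel_measurable (borelX X \<Otimes>\<^sub>M N)"
proof -
  define R where "R n x = restrict x {-int n..int n}" for n :: nat and x :: "int \<Rightarrow> 'a"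
  define I where "I n = R n ` X" for n
  define rep where "rep n z = (SOME x. x \<in> X \<and> R n x = z)" for n z
  have rep: "rep n z \<in> X \<and> R n (rep n z) = z" if "z \<in> I n" for n z
  proof -
    from that obtain x where "x \<in> X" "R n x = z" unfolding I_def by blast
    then show ?thesis unfolding rep_def by (metis (mono_tags, lifting) someI)
  qed
  have spM: "space (borelX X \<Otimes>\<^sub>M N) = X \<times> space N"
    by (simp add: space_pair_measure space_borelX)
  have finI: "finite (I n)" for n
  proof -
    have "I n \<subseteq> {-int n..int n} \<rightarrow>\<^sub>E (UNIV :: 'a set)"
      unfolding I_def R_def by auto
    moreover have "finite ({-int n..int n} \<rightarrow>\<^sub>E (UNIV :: 'a set))"
      by (intro finite_PiE) auto
    ultimately show ?thesis by (rule finite_subset)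
  qed
  define u where "u n p = h (rep n (R n (fst p))) (snd p)" for n p
  have um: "u n \<in> borel_measurable (borelX X \<Otimes>\<^sub>M N)" for n
  proof -
    have "(\<lambda>p. (\<lambda>z p. h (rep n z) (snd p)) ((\<lambda>p. R n (fst p)) p) p) \<in> borel_measurable (borelX X \<Otimes>\<^sub>M N)"
    proof (rule measurable_compose_countable'[where I="I n" and f="\<lambda>z p. h (rep n z) (snd p)" and g="\<lambda>p. R n (fst p)"])
      fix z assume z: "z \<in> I n"
      then have "rep n z \<in> X" using rep by blast
      then have "continuous_on UNIV (h (rep n z))" using cy by blast
      then have "h (rep n z) \<in> borel_measurable borel" by (rule borel_measurable_continuous_onI)
      then have "h (rep n z) \<in> borel_measurable N" using measurable_cong_sets[OF N refl] by blast
      then show "(\<lambda>p. h (rep n z) (snd p)) \<in> borel_measurable (borelX X \<Otimes>\<^sub>M N)"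
        by (rule measurable_compose[OF measurable_snd])
    next
      show "(\<lambda>p. R n (fst p)) \<in> measurable (borelX X \<Otimes>\<^sub>M N) (count_space (I n))"
        unfolding measurable_count_space_eq2[OF finI]
      proof (intro conjI ballI)
        show "(\<lambda>p. R n (fst p)) \<in> space (borelX X \<Otimes>\<^sub>M N) \<rightarrow> I n"
          unfolding spM I_def by auto
      next
        fix a assume "a \<in> I n"
        have "(\<lambda>p. R n (fst p)) -` {a} \<inter> space (borelX X \<Otimes>\<^sub>M N) = {x\<in>X. restrict x {-int n..int n} = a} \<times> space N"
          unfolding spM R_def by auto
        also have "\<dots> \<in> sets (borelX X \<Otimes>\<^sub>M N)"
          by (intro pair_measureI sets_borelX_open cyl_open sets.top)
        finally show "(\<lambda>p. R n (fst p)) -` {a} \<inter> space (borelX X \<Otimes>\<^sub>M N) \<in> sets (borelX X \<Otimes>\<^sub>M N)" .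
      qed
    qed (rule countable_finite[OF finI])
    then show ?thesis unfolding u_def by simp
  qed
  show ?thesis
  proof (rule borel_measurable_LIMSEQ_real[OF _ um])
    fix p assume p: "p \<in> space (borelX X \<Otimes>\<^sub>M N)"
    then have x: "fst p \<in> X" unfolding spM by auto
    have repx: "rep n (R n (fst p)) \<in> X \<and> R n (rep n (R n (fst p))) = R n (fst p)" for n
      using rep x unfolding I_def by blast
    have dxn: "dX (rep n (R n (fst p))) (fst p) \<le> (1/2) ^ Suc n" for n
    proof (rule dX_agree, intro allI impI)
      fix i :: int assume "\<bar>i\<bar> \<le> int n"
      then have "i \<in> {-int n..int n}" by auto
      then show "rep n (R n (fst p)) i = fst p i"
        using repx[of n] unfolding R_def restrict_def by meson
    qed
    show "(\<lambda>n. u n p) \<longlonglongrightarrow> h (fst p) (snd p)"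
    proof (rule LIMSEQ_I)
      fix e :: real assume e: "e > 0"
      then obtain d where d: "d > 0" "\<forall>x'\<in>X. dX x' (fst p) < d \<longrightarrow> \<bar>h x' (snd p) - h (fst p) (snd p)\<bar> < e"
        using cx x by blast
      have "(\<lambda>n. (1/2::real) ^ n) \<longlonglongrightarrow> 0" by (rule LIMSEQ_power_zero) simp
      then obtain M where M: "\<forall>n\<ge>M. norm ((1/2::real) ^ n - 0) < d" using d(1) LIMSEQ_D by blast
      show "\<exists>M. \<forall>n\<ge>M. norm (u n p - h (fst p) (snd p)) < e"
      proof (intro exI[of _ M] allI impI)
        fix n assume "n \<ge> M"
        then have "(1/2::real) ^ n < d" using M by simp
        moreover have "(1/2::real) ^ Suc n \<le> (1/2) ^ n" by simp
        ultimately have "(1/2::real) ^ Suc n < d" by linarith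
        then have "dX (rep n (R n (fst p))) (fst p) < d" using dxn[of n] by linarith
        then show "norm (u n p - h (fst p) (snd p)) < e"
          using d(2) repx[of n] unfolding u_def by simp
      qed
    qed
  qed
qed

lemma Sup_close:
  fixes a b :: "'i \<Rightarrow> real"
  assumes ab: "\<forall>i\<in>I. \<bar>a i - b i\<bar> \<le> \<eta>" and eta: "\<eta> \<ge> 0"
  shows "\<bar>Sup (a ` I) - Sup (b ` I)\<bar> \<le> \<eta>"
proof (cases "I = {}")
  case True then show ?thesis using eta by simp
next
  case ne: False
  have bdd_iff: "bdd_above (a ` I) \<longleftrightarrow> bdd_above (b ` I)"
  proof
    assume "bdd_above (a ` I)"
    then obtain M where "\<forall>i\<in>I. a i \<le> M" by (auto simp: bdd_above_def)
    then have "\<forall>i\<in>I. b i \<le> M + \<eta>" using ab by (smt (verit))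
    then show "bdd_above (b ` I)" by (auto simp: bdd_above_def)
  next
    assume "bdd_above (b ` I)"
    then obtain M where "\<forall>i\<in>I. b i \<le> M" by (auto simp: bdd_above_def)
    then have "\<forall>i\<in>I. a i \<le> M + \<eta>" using ab by (smt (verit))
    then show "bdd_above (a ` I)" by (auto simp: bdd_above_def)
  qed
  show ?thesis
  proof (cases "bdd_above (a ` I)")
    case True
    then have Tb: "bdd_above (b ` I)" using bdd_iff by simp
    have 1: "Sup (b ` I) \<le> Sup (a ` I) + \<eta>"
    proof (rule cSUP_least[OF ne])
      fix i assume i: "i \<in> I"
      have "a i \<le> Sup (a ` I)" by (rule cSUP_upper[OF i True])
      then show "b i \<le> Sup (a ` I) + \<eta>" using ab i by (smt (verit))
    qed
    have 2: "Sup (a ` I) \<le> Sup (b ` I) + \<eta>"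
    proof (rule cSUP_least[OF ne])
      fix i assume i: "i \<in> I"
      have "b i \<le> Sup (b ` I)" by (rule cSUP_upper[OF i Tb])
      then show "a i \<le> Sup (b ` I) + \<eta>" using ab i by (smt (verit))
    qed
    show ?thesis using 1 2 by linarith
  next
    case False
    then have Fb: "\<not> bdd_above (b ` I)" using bdd_iff by simp
    have "(\<lambda>z. \<forall>x\<in>a ` I. x \<le> z) = (\<lambda>z. \<forall>x\<in>b ` I. x \<le> z)"
      using False Fb unfolding bdd_above_def by (intro ext iffI) blast+
    then have "Sup (a ` I) = Sup (b ` I)" unfolding Sup_real_def by simp
    then show ?thesis using eta by simp
  qed
qed

lemma Inf_close:
  fixes a b :: "'i \<Rightarrow> real"
  assumes ab: "\<forall>i\<in>I. \<bar>a i - b i\<bar> \<le> \<eta>" and eta: "\<eta> \<ge> 0"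
  shows "\<bar>Inf (a ` I) - Inf (b ` I)\<bar> \<le> \<eta>"
proof -
  have "\<bar>Sup ((\<lambda>i. - a i) ` I) - Sup ((\<lambda>i. - b i) ` I)\<bar> \<le> \<eta>"
    by (rule Sup_close) (use ab eta in auto)
  then show ?thesis unfolding Inf_real_def image_image by simp
qed

lemma int_close:
  fixes g1 g2 :: "'x \<Rightarrow> real"
  assumes M: "prob_space M" and m1: "g1 \<in> borel_measurable M" and m2: "g2 \<in> borel_measurable M"
    and b1: "\<forall>x\<in>space M. \<bar>g1 x\<bar> \<le> B1" and b2: "\<forall>x\<in>space M. \<bar>g2 x\<bar> \<le> B2"
    and d: "\<forall>x\<in>space M. \<bar>g1 x - g2 x\<bar> \<le> \<eta>"
  shows "\<bar>(\<integral>x. g1 x \<partial>M) - (\<integral>x. g2 x \<partial>M)\<bar> \<le> \<eta>"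
proof -
  interpret prob_space M by (rule M)
  have i1: "integrable M g1"
    by (rule integrable_const_bound[where B=B1]) (use b1 m1 in auto)
  have i2: "integrable M g2"
    by (rule integrable_const_bound[where B=B2]) (use b2 m2 in auto)
  have "(\<integral>x. g1 x \<partial>M) - (\<integral>x. g2 x \<partial>M) = (\<integral>x. g1 x - g2 x \<partial>M)"
    using i1 i2 by simp
  also have "\<bar>\<dots>\<bar> \<le> (\<integral>x. \<bar>g1 x - g2 x\<bar> \<partial>M)"
    by (rule integral_abs_bound)
  also have "\<dots> \<le> (\<integral>x. \<eta> \<partial>M)"
    by (rule integral_mono) (use i1 i2 d in auto)
  also have "\<dots> = \<eta>" by (simp add: prob_space)
  finally show ?thesis .
qed

lemma holder_bound:
  assumes "holder_on r X g" "x1 \<in> X" "r > 0"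
  shows "\<exists>B. \<forall>x\<in>X. \<bar>g x\<bar> \<le> B"
proof -
  obtain C where C: "\<forall>x\<in>X. \<forall>y\<in>X. \<bar>g x - g y\<bar> \<le> C * dX x y powr r"
    using assms(1) unfolding holder_on_def by blast
  have "\<bar>g x\<bar> \<le> \<bar>g x1\<bar> + \<bar>C\<bar>" if x: "x \<in> X" for x
  proof -
    have p: "dX x x1 powr r \<le> 1" "0 \<le> dX x x1 powr r"
      using dX_nonneg[of x x1] dX_le1[of x x1] assms(3) by (intro powr_le1, auto)
    have "\<bar>g x - g x1\<bar> \<le> C * dX x x1 powr r" using C x assms(2) by blast
    also have "\<dots> \<le> \<bar>C\<bar>" using p by (smt (verit) mult_left_le mult_nonneg_nonneg mult_nonpos_nonneg)
    finally show ?thesis by linarith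
  qed
  then show ?thesis by blast
qed

lemma holder_cont:
  assumes "holder_on r X g" "r > 0"
  shows "\<forall>x\<in>X. \<forall>e>0. \<exists>d>0. \<forall>y\<in>X. dX x y < d \<longrightarrow> \<bar>g y - g x\<bar> < e"
proof (intro ballI allI impI)
  fix x and e :: real assume x: "x \<in> X" and e: "e > 0"
  obtain C where C: "\<forall>x\<in>X. \<forall>y\<in>X. \<bar>g x - g y\<bar> \<le> C * dX x y powr r"
    using assms(1) unfolding holder_on_def by blast
  define C' where "C' = \<bar>C\<bar> + 1"
  have C': "C' > 0" unfolding C'_def by simp
  define d where "d = (e / C') powr (1/r)"
  have d: "d > 0" unfolding d_def using e C' by simp
  have dr: "d powr r = e / C'" unfolding d_def using e C' assms(2) by (simp add: powr_powr)
  show "\<exists>d>0. \<forall>y\<in>X. dX x y < d \<longrightarrow> \<bar>g y - g x\<bar> < e"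
  proof (intro exI[of _ d] conjI ballI impI d)
    fix y assume y: "y \<in> X" "dX x y < d"
    have "dX y x powr r < d powr r"
      using y(2) dX_nonneg[of y x] assms(2) by (simp add: dX_sym powr_less_mono2)
    then have lt: "dX y x powr r < e / C'" using dr by simp
    have nn: "0 \<le> dX y x powr r" by simp
    have "\<bar>g y - g x\<bar> \<le> C * dX y x powr r" using C x y(1) by blast
    also have "\<dots> \<le> C' * dX y x powr r" unfolding C'_def using nn by (smt (verit) mult_right_mono)
    also have "\<dots> < C' * (e / C')" using lt C' by (intro mult_strict_left_mono) auto
    also have "\<dots> = e" using C' by simp
    finally show "\<bar>g y - g x\<bar> < e" .
  qed
qed

lemma holder_norm_sup:
  assumes h: "holder_on r X g" and x12: "x1 \<in> X" "x2 \<in> X" "x1 \<noteq> x2" and r: "r > 0"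
    and n: "holder_norm r X g < \<eta>"
  shows "\<forall>x\<in>X. \<bar>g x\<bar> \<le> \<eta>"
proof
  fix x assume x: "x \<in> X"
  obtain B where B: "\<forall>x\<in>X. \<bar>g x\<bar> \<le> B" using holder_bound[OF h x12(1) r] by blast
  have bA: "bdd_above ((\<lambda>x. \<bar>g x\<bar>) ` X)" using B by (auto simp: bdd_above_def)
  obtain C where C: "\<forall>x\<in>X. \<forall>y\<in>X. \<bar>g x - g y\<bar> \<le> C * dX x y powr r"
    using h unfolding holder_on_def by blast
  define P where "P = {(x,y). x \<in> X \<and> y \<in> X \<and> x \<noteq> y}"
  define q where "q p = \<bar>g (fst p) - g (snd p)\<bar> / dX (fst p) (snd p) powr r" for p
  have qC: "q p \<le> C" if "p \<in> P" for p
  proof -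
    have "fst p \<noteq> snd p" using that unfolding P_def by auto
    then have "0 < dX (fst p) (snd p)" by (rule dX_pos)
    then have pos: "0 < dX (fst p) (snd p) powr r" by simp
    have "\<bar>g (fst p) - g (snd p)\<bar> \<le> C * dX (fst p) (snd p) powr r" using C that unfolding P_def by auto
    then show ?thesis unfolding q_def using pos by (simp add: divide_le_eq)
  qed
  have bQ: "bdd_above (q ` P)" unfolding bdd_above_def using qC by blast
  have "(x1, x2) \<in> P" using x12 unfolding P_def by auto
  then have "q (x1, x2) \<le> Sup (q ` P)" using bQ by (intro cSUP_upper)
  moreover have "0 \<le> q (x1, x2)" unfolding q_def by simp
  ultimately have Q0: "0 \<le> Sup (q ` P)" by linarith
  have "\<bar>g x\<bar> \<le> Sup ((\<lambda>x. \<bar>g x\<bar>) ` X)" using x bA by (intro cSUP_upper)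
  moreover have "holder_norm r X g = Sup ((\<lambda>x. \<bar>g x\<bar>) ` X) + Sup (q ` P)"
    unfolding holder_norm_def P_def q_def by simp
  ultimately show "\<bar>g x\<bar> \<le> \<eta>" using Q0 n by linarith
qed

lemma holder_diff:
  assumes "holder_on r X g1" "holder_on r X g2"
  shows "holder_on r X (\<lambda>x. g1 x - g2 x)"
proof -
  obtain C1 where C1: "\<forall>x\<in>X. \<forall>y\<in>X. \<bar>g1 x - g1 y\<bar> \<le> C1 * dX x y powr r"
    using assms(1) unfolding holder_on_def by blast
  obtain C2 where C2: "\<forall>x\<in>X. \<forall>y\<in>X. \<bar>g2 x - g2 y\<bar> \<le> C2 * dX x y powr r"
    using assms(2) unfolding holder_on_def by blast
  have "\<forall>x\<in>X. \<forall>y\<in>X. \<bar>(g1 x - g2 x) - (g1 y - g2 y)\<bar> \<le> (C1 + C2) * dX x y powr r"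
  proof (intro ballI)
    fix x y assume "x \<in> X" "y \<in> X"
    then have "\<bar>g1 x - g1 y\<bar> \<le> C1 * dX x y powr r" "\<bar>g2 x - g2 y\<bar> \<le> C2 * dX x y powr r"
      using C1 C2 by auto
    then show "\<bar>(g1 x - g2 x) - (g1 y - g2 y)\<bar> \<le> (C1 + C2) * dX x y powr r"
      by (simp add: distrib_right)
  qed
  then show ?thesis unfolding holder_on_def by blast
qed

lemma sft_shift: "x \<in> sft F \<Longrightarrow> shift x \<in> sft F"
proof -
  assume x: "x \<in> sft F"
  have "occurs_at (shift x) i w = occurs_at x (i + 1) w" for i w
    unfolding occurs_at_def shift_def by (simp add: algebra_simps)
  then show ?thesis using x unfolding sft_def by auto
qed

lemma singleton_pressure:
  assumes X: "X = {x0}" and sx: "shift x0 = x0"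
  shows "pressure X g = g x0 + ks_entropy (return (borelX X) x0) shift"
proof -
  define M where "M = borelX X"
  define \<mu>0 where "\<mu>0 = return M x0"
  have spM: "space M = {x0}" unfolding M_def using X by (simp add: space_borelX)
  have setsM: "A = {} \<or> A = {x0}" if "A \<in> sets M" for A
    using sets.sets_into_space[OF that] spM by auto
  have pr0: "prob_space \<mu>0" unfolding \<mu>0_def by (rule prob_space_return) (simp add: spM)
  have sm: "shift \<in> measurable M M"
  proof (rule measurableI)
    fix x assume "x \<in> space M" then show "shift x \<in> space M" using spM sx by simp
  next
    fix A assume A: "A \<in> sets M"
    have "shift -` A \<inter> space M = A" using setsM[OF A] spM sx by auto
    then show "shift -` A \<inter> space M \<in> sets M" using A by simp
  qed
  have "invariant_prob M shift = {\<mu>0}"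
  proof
    show "{\<mu>0} \<subseteq> invariant_prob M shift"
      unfolding invariant_prob_def using pr0 distr_return[OF sm, of x0] sx spM
      by (simp add: \<mu>0_def)
  next
    show "invariant_prob M shift \<subseteq> {\<mu>0}"
    proof
      fix \<mu> assume "\<mu> \<in> invariant_prob M shift"
      then have \<mu>: "prob_space \<mu>" "sets \<mu> = sets M" unfolding invariant_prob_def by auto
      have sp\<mu>: "space \<mu> = {x0}" using sets_eq_imp_space_eq[OF \<mu>(2)] spM by simp
      have "\<mu> = \<mu>0"
      proof (rule measure_eqI)
        show "sets \<mu> = sets \<mu>0" using \<mu>(2) by (simp add: \<mu>0_def)
      next
        fix A assume A: "A \<in> sets \<mu>"
        then have A': "A \<in> sets M" using \<mu>(2) by simp
        show "emeasure \<mu> A = emeasure \<mu>0 A"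
        proof (cases "A = {}")
          case True then show ?thesis by simp
        next
          case False
          then have Ax: "A = {x0}" using setsM[OF A'] by blast
          have "emeasure \<mu> A = 1" using prob_space.emeasure_space_1[OF \<mu>(1)] sp\<mu> Ax by simp
          moreover have "emeasure \<mu>0 A = 1" unfolding \<mu>0_def using A' Ax by simp
          ultimately show ?thesis by simp
        qed
      qed
      then show "\<mu> \<in> {\<mu>0}" by simp
    qed
  qed
  moreover have "(\<integral>x. g x \<partial>\<mu>0) = g x0"
  proof -
    have "(\<integral>x. g x \<partial>\<mu>0) = (\<integral>x. g x0 \<partial>\<mu>0)"
      by (rule Bochner_Integration.integral_cong) (auto simp: \<mu>0_def spM)
    also have "\<dots> = g x0" using prob_space.prob_space[OF pr0] by simp
    finally show ?thesis .
  qed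
  ultimately show ?thesis unfolding pressure_def M_def[symmetric] \<mu>0_def[symmetric] by simp
qed

lemma joining_facts:
  assumes L: "L \<in> joinings X T \<nu>" and nu: "sets \<nu> = sets (borel :: 'y::topological_space measure)"
  shows "prob_space L" "sets L = sets (borelX X \<Otimes>\<^sub>M \<nu>)" "space L = X \<times> (UNIV :: 'y set)"
    "snd \<in> measurable L \<nu>" "distr L \<nu> snd = \<nu>"
proof -
  show pL: "prob_space L" and sL: "sets L = sets (borelX X \<Otimes>\<^sub>M \<nu>)" and "distr L \<nu> snd = \<nu>"
    using L unfolding joinings_def by auto
  have "space \<nu> = UNIV" using sets_eq_imp_space_eq[OF nu] by simp
  then show "space L = X \<times> (UNIV :: 'y set)" using sets_eq_imp_space_eq[OF sL]
    by (simp add: space_pair_measure space_borelX)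
  show "snd \<in> measurable L \<nu>" using measurable_cong_sets[OF sL refl] measurable_snd by blast
qed

lemma loss_part:
  fixes X :: "(int \<Rightarrow> 'a::finite) set"
    and \<nu> :: "'y::metric_space measure"
    and \<Theta> :: "'c::metric_space set"
    and loss :: "'c \<Rightarrow> (int \<Rightarrow> 'a) \<Rightarrow> 'y \<Rightarrow> real"
  assumes nu: "sets \<nu> = sets borel"
    and meas: "\<forall>\<theta>\<in>\<Theta>. (\<lambda>p. loss \<theta> (fst p) (snd p)) \<in> borel_measurable (borelX X \<Otimes>\<^sub>M \<nu>)"
    and l_bound: "lstar \<in> borel_measurable \<nu>" "integrable \<nu> lstar"
        "\<forall>\<theta>\<in>\<Theta>. \<forall>x\<in>X. \<forall>y. \<bar>loss \<theta> x y\<bar> \<le> lstar y"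
    and l_mod: "\<forall>\<delta>>0. \<rho> \<delta> \<in> borel_measurable \<nu> \<and> (\<forall>y. \<rho> \<delta> y > 0) \<and>
        (\<forall>\<theta>\<in>\<Theta>. \<forall>\<theta>'\<in>\<Theta>. \<forall>x\<in>X. \<forall>x'\<in>X. \<forall>y.
           max (dist \<theta> \<theta>') (dX x x') \<le> \<delta> \<longrightarrow> \<bar>loss \<theta> x y - loss \<theta>' x' y\<bar> \<le> \<rho> \<delta> y)"
        "((\<lambda>\<delta>. \<integral>\<^sup>+ y. ennreal (\<rho> \<delta> y) \<partial>\<nu>) \<longlongrightarrow> 0) (at_right 0)"
    and th: "\<theta> \<in> \<Theta>" and e: "\<epsilon> > 0"
  shows "\<exists>\<delta>>0. \<forall>\<theta>'\<in>\<Theta>. dist \<theta>' \<theta> < \<delta> \<longrightarrow> (\<forall>L\<in>joinings X T \<nu>.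
     \<bar>(\<integral>p. loss \<theta>' (fst p) (snd p) \<partial>L) - (\<integral>p. loss \<theta> (fst p) (snd p) \<partial>L)\<bar> \<le> \<epsilon>)"
proof -
  have "eventually (\<lambda>\<delta>. (\<integral>\<^sup>+ y. ennreal (\<rho> \<delta> y) \<partial>\<nu>) < ennreal \<epsilon>) (at_right 0)"
    using order_tendstoD(2)[OF l_mod(2)] e by simp
  then obtain b :: real where b: "b > 0" "\<forall>\<delta>>0. \<delta> < b \<longrightarrow> (\<integral>\<^sup>+ y. ennreal (\<rho> \<delta> y) \<partial>\<nu>) < ennreal \<epsilon>"
    unfolding eventually_at_right_field by auto
  define \<delta> where "\<delta> = b / 2"
  have \<delta>: "\<delta> > 0" "(\<integral>\<^sup>+ y. ennreal (\<rho> \<delta> y) \<partial>\<nu>) < ennreal \<epsilon>" using b unfolding \<delta>_def by auto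
  have rm: "\<rho> \<delta> \<in> borel_measurable \<nu>" using l_mod(1) \<delta>(1) by blast
  show ?thesis
  proof (intro exI[of _ \<delta>] conjI ballI impI \<delta>(1))
    fix \<theta>' L assume th': "\<theta>' \<in> \<Theta>" and d: "dist \<theta>' \<theta> < \<delta>" and L: "L \<in> joinings X T \<nu>"
    note LF = joining_facts[OF L nu]
    interpret prob_space L by (rule LF(1))
    have mL: "(\<lambda>p. loss t (fst p) (snd p)) \<in> borel_measurable L" if "t \<in> \<Theta>" for t
      using meas that measurable_cong_sets[OF LF(2) refl] by blast
    have ils: "integrable L (\<lambda>p. lstar (snd p))"
      using integrable_distr_eq[OF LF(4) l_bound(1)] LF(5) l_bound(2) by simp
    have iL: "integrable L (\<lambda>p. loss t (fst p) (snd p))" if "t \<in> \<Theta>" for t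
    proof (rule Bochner_Integration.integrable_bound[OF ils mL[OF that]])
      show "AE x in L. norm (loss t (fst x) (snd x)) \<le> norm (lstar (snd x))"
      proof (rule AE_I2)
        fix p assume "p \<in> space L"
        then have "fst p \<in> X" using LF(3) by auto
        then have "\<bar>loss t (fst p) (snd p)\<bar> \<le> lstar (snd p)" using l_bound(3) that by blast
        then show "norm (loss t (fst p) (snd p)) \<le> norm (lstar (snd p))" by simp
      qed
    qed
    define D where "D p = loss \<theta>' (fst p) (snd p) - loss \<theta> (fst p) (snd p)" for p
    have iD: "integrable L D" unfolding D_def using iL[OF th] iL[OF th'] by (rule Bochner_Integration.integrable_diff[rotated])
    have Db: "\<bar>D p\<bar> \<le> \<rho> \<delta> (snd p)" if "p \<in> space L" for p
    proof -
      have "fst p \<in> X" using that LF(3) by auto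
      moreover have "max (dist \<theta>' \<theta>) (dX (fst p) (fst p)) \<le> \<delta>" using d by (simp add: dX_self)
      ultimately show ?thesis unfolding D_def using l_mod(1) \<delta>(1) th th' by blast
    qed
    have "ennreal (\<integral>p. \<bar>D p\<bar> \<partial>L) = (\<integral>\<^sup>+ p. ennreal \<bar>D p\<bar> \<partial>L)"
      by (rule nn_integral_eq_integral[symmetric]) (use iD in simp_all)
    also have "\<dots> \<le> (\<integral>\<^sup>+ p. ennreal (\<rho> \<delta> (snd p)) \<partial>L)"
      by (rule nn_integral_mono) (use Db in \<open>simp add: ennreal_leI\<close>)
    also have "\<dots> = (\<integral>\<^sup>+ y. ennreal (\<rho> \<delta> y) \<partial>(distr L \<nu> snd))"
      by (rule nn_integral_distr[symmetric]) (use LF(4) rm in simp_all)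
    also have "\<dots> < ennreal \<epsilon>" using LF(5) \<delta>(2) by simp
    finally have "(\<integral>p. \<bar>D p\<bar> \<partial>L) < \<epsilon>" by (simp add: ennreal_less_iff)
    moreover have "(\<integral>p. loss \<theta>' (fst p) (snd p) \<partial>L) - (\<integral>p. loss \<theta> (fst p) (snd p) \<partial>L) = (\<integral>p. D p \<partial>L)"
      unfolding D_def using iL th th' by simp
    moreover have "\<bar>\<integral>p. D p \<partial>L\<bar> \<le> (\<integral>p. \<bar>D p\<bar> \<partial>L)" by (rule integral_abs_bound)
    ultimately show "\<bar>(\<integral>p. loss \<theta>' (fst p) (snd p) \<partial>L) - (\<integral>p. loss \<theta> (fst p) (snd p) \<partial>L)\<bar> \<le> \<epsilon>"
      by linarith
  qed
qed

theorem proposition6p1: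
  fixes X :: "(int \<Rightarrow> 'a::finite) set"
    and T :: "'y::polish_space \<Rightarrow> 'y"
    and \<nu> :: "'y measure"
    and \<Theta> :: "'c::metric_space set"
    and f :: "'c \<Rightarrow> (int \<Rightarrow> 'a) \<Rightarrow> real"
    and loss :: "'c \<Rightarrow> (int \<Rightarrow> 'a) \<Rightarrow> 'y \<Rightarrow> real"
    and lstar :: "'y \<Rightarrow> real"
    and \<rho> :: "real \<Rightarrow> 'y \<Rightarrow> real"
  assumes X: "mixing_sft X" "X \<noteq> {}"
    and nu: "prob_space \<nu>" "sets \<nu> = sets borel"
    and T: "T \<in> borel_measurable borel"
    and erg: "ergodic_mp \<nu> T"
    and Theta: "compact \<Theta>" "\<Theta> \<noteq> {}"
    and f: "regular_family \<Theta> X f"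
    and l_cont: "\<forall>\<theta>\<in>\<Theta>. \<forall>x\<in>X. \<forall>y. \<forall>\<epsilon>>0. \<exists>\<delta>>0. \<forall>\<theta>'\<in>\<Theta>. \<forall>x'\<in>X. \<forall>y'.
        dist \<theta>' \<theta> < \<delta> \<and> dX x' x < \<delta> \<and> dist y' y < \<delta> \<longrightarrow> \<bar>loss \<theta>' x' y' - loss \<theta> x y\<bar> < \<epsilon>"
    and l_bound: "lstar \<in> borel_measurable \<nu>" "integrable \<nu> lstar"
        "\<forall>\<theta>\<in>\<Theta>. \<forall>x\<in>X. \<forall>y. \<bar>loss \<theta> x y\<bar> \<le> lstar y"
    and l_mod: "\<forall>\<delta>>0. \<rho> \<delta> \<in> borel_measurable \<nu> \<and> (\<forall>y. \<rho> \<delta> y > 0) \<and>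
        (\<forall>\<theta>\<in>\<Theta>. \<forall>\<theta>'\<in>\<Theta>. \<forall>x\<in>X. \<forall>x'\<in>X. \<forall>y.
           max (dist \<theta> \<theta>') (dX x x') \<le> \<delta> \<longrightarrow> \<bar>loss \<theta> x y - loss \<theta>' x' y\<bar> \<le> \<rho> \<delta> y)"
        "((\<lambda>\<delta>. \<integral>\<^sup>+ y. ennreal (\<rho> \<delta> y) \<partial>\<nu>) \<longlongrightarrow> 0) (at_right 0)"
  shows "lsc_on \<Theta> (rate_fun X T \<nu> f loss)
    \<and> {\<theta>\<in>\<Theta>. \<forall>\<theta>'\<in>\<Theta>. rate_fun X T \<nu> f loss \<theta> \<le> rate_fun X T \<nu> f loss \<theta>'} \<noteq> {}
    \<and> compact {\<theta>\<in>\<Theta>. \<forall>\<theta>'\<in>\<Theta>. rate_fun X T \<nu> f loss \<theta> \<le> rate_fun X T \<nu> f loss \<theta>'}"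
proof -
  define V where "V = rate_fun X T \<nu> f loss"
  define J where "J = joinings X T \<nu>"
  define P where "P \<theta> = pressure X (f \<theta>)" for \<theta>
  define Fi where "Fi \<theta> L = (\<integral>p. f \<theta> (fst p) \<partial>L)" for \<theta> and L :: "((int \<Rightarrow> 'a) \<times> 'y) measure"
  define Lo where "Lo \<theta> L = (\<integral>p. loss \<theta> (fst p) (snd p) \<partial>L)" for \<theta> and L :: "((int \<Rightarrow> 'a) \<times> 'y) measure"
  define G where "G \<theta> L = Lo \<theta> L + P \<theta> - fiber_entropy X \<nu> L - Fi \<theta> L" for \<theta> L
  have VG: "V \<theta> = Inf (G \<theta> ` J)" for \<theta>
    unfolding V_def rate_fun_def G_def J_def Lo_def P_def Fi_def by simp
  obtain F where XF: "X = sft F" using X(1) unfolding mixing_sft_def by blast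
  have shiftX: "shift x \<in> X" if "x \<in> X" for x using sft_shift that XF by blast
  have cont_y: "\<forall>\<theta>\<in>\<Theta>. \<forall>x\<in>X. continuous_on UNIV (loss \<theta> x)"
  proof (intro ballI)
    fix \<theta> x assume th: "\<theta> \<in> \<Theta>" and x: "x \<in> X"
    show "continuous_on UNIV (loss \<theta> x)"
      unfolding continuous_on_iff
    proof (intro ballI allI impI)
      fix y and e :: real assume "e > 0"
      then obtain d where d: "d > 0" "\<forall>\<theta>'\<in>\<Theta>. \<forall>x'\<in>X. \<forall>y'.
        dist \<theta>' \<theta> < d \<and> dX x' x < d \<and> dist y' y < d \<longrightarrow> \<bar>loss \<theta>' x' y' - loss \<theta> x y\<bar> < e"
        using l_cont th x by blast
      show "\<exists>d>0. \<forall>y'\<in>UNIV. dist y' y < d \<longrightarrow> dist (loss \<theta> x y') (loss \<theta> x y) < e"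
        using d th x by (intro exI[of _ d]) (auto simp: dist_real_def dX_self)
    qed
  qed
  have cont_x: "\<forall>y. \<forall>x\<in>X. \<forall>e>0. \<exists>d>0. \<forall>x'\<in>X. dX x' x < d \<longrightarrow> \<bar>loss \<theta> x' y - loss \<theta> x y\<bar> < e"
    if th: "\<theta> \<in> \<Theta>" for \<theta>
  proof (intro allI ballI impI)
    fix y x and e :: real assume x: "x \<in> X" and "e > 0"
    then obtain d where d: "d > 0" "\<forall>\<theta>'\<in>\<Theta>. \<forall>x'\<in>X. \<forall>y'.
      dist \<theta>' \<theta> < d \<and> dX x' x < d \<and> dist y' y < d \<longrightarrow> \<bar>loss \<theta>' x' y' - loss \<theta> x y\<bar> < e"
      using l_cont th x by blast
    show "\<exists>d>0. \<forall>x'\<in>X. dX x' x < d \<longrightarrow> \<bar>loss \<theta> x' y - loss \<theta> x y\<bar> < e"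
      using d th by (intro exI[of _ d]) auto
  qed
  have meas: "\<forall>\<theta>\<in>\<Theta>. (\<lambda>p. loss \<theta> (fst p) (snd p)) \<in> borel_measurable (borelX X \<Otimes>\<^sub>M \<nu>)"
  proof
    fix \<theta> assume th: "\<theta> \<in> \<Theta>"
    show "(\<lambda>p. loss \<theta> (fst p) (snd p)) \<in> borel_measurable (borelX X \<Otimes>\<^sub>M \<nu>)"
      by (rule prod_meas[OF nu(2)]) (use cont_y th cont_x[OF th] in auto)
  qed
  have KL: "\<exists>\<delta>>0. \<forall>\<theta>'\<in>\<Theta>. dist \<theta>' \<theta> < \<delta> \<longrightarrow> (\<forall>L\<in>J. \<bar>Lo \<theta>' L - Lo \<theta> L\<bar> \<le> \<epsilon>)"
    if "\<theta> \<in> \<Theta>" "\<epsilon> > 0" for \<theta> \<epsilon>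
    using loss_part[OF nu(2) meas l_bound l_mod that, of T] unfolding Lo_def J_def by blast
  have KF: "\<exists>\<delta>>0. \<forall>\<theta>'\<in>\<Theta>. dist \<theta>' \<theta> < \<delta> \<longrightarrow> (\<forall>L\<in>J. \<bar>(P \<theta>' - Fi \<theta>' L) - (P \<theta> - Fi \<theta> L)\<bar> \<le> \<epsilon>)"
    if th: "\<theta> \<in> \<Theta>" and e: "\<epsilon> > 0" for \<theta> \<epsilon>
  proof (cases "\<exists>x1\<in>X. \<exists>x2\<in>X. x1 \<noteq> x2")
    case True
    then obtain x1 x2 where x12: "x1 \<in> X" "x2 \<in> X" "x1 \<noteq> x2" by blast
    obtain r where r: "r > 0" "\<forall>\<theta>\<in>\<Theta>. holder_on r X (f \<theta>)"
      "\<forall>\<theta>\<in>\<Theta>. \<forall>\<epsilon>>0. \<exists>\<delta>>0. \<forall>\<theta>'\<in>\<Theta>. dist \<theta>' \<theta> < \<delta> \<longrightarrow>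
        holder_norm r X (\<lambda>x. f \<theta>' x - f \<theta> x) < \<epsilon>"
      using f unfolding regular_family_def by blast
    obtain \<delta> where \<delta>: "\<delta> > 0" "\<forall>\<theta>'\<in>\<Theta>. dist \<theta>' \<theta> < \<delta> \<longrightarrow>
        holder_norm r X (\<lambda>x. f \<theta>' x - f \<theta> x) < \<epsilon>/2"
      using r(3) th e by (meson half_gt_zero)
    have fm: "f t \<in> borel_measurable (borelX X)" if "t \<in> \<Theta>" for t
      by (rule cont_meas_borelX[OF holder_cont]) (use r that in auto)
    have fb: "\<exists>B. \<forall>x\<in>X. \<bar>f t x\<bar> \<le> B" if "t \<in> \<Theta>" for t
      by (rule holder_bound[OF _ x12(1) r(1)]) (use r that in auto)
    show ?thesis
    proof (intro exI[of _ \<delta>] conjI ballI impI \<delta>(1))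
      fix \<theta>' L assume th': "\<theta>' \<in> \<Theta>" and d: "dist \<theta>' \<theta> < \<delta>" and L: "L \<in> J"
      have hd: "holder_on r X (\<lambda>x. f \<theta>' x - f \<theta> x)" using holder_diff r(2) th th' by blast
      have close: "\<forall>x\<in>X. \<bar>f \<theta>' x - f \<theta> x\<bar> \<le> \<epsilon>/2"
        by (rule holder_norm_sup[OF hd x12 r(1)]) (use \<delta> th' d in blast)
      obtain B1 where B1: "\<forall>x\<in>X. \<bar>f \<theta>' x\<bar> \<le> B1" using fb th' by blast
      obtain B2 where B2: "\<forall>x\<in>X. \<bar>f \<theta> x\<bar> \<le> B2" using fb th by blast
      have Pc: "\<bar>P \<theta>' - P \<theta>\<bar> \<le> \<epsilon>/2"
        unfolding P_def pressure_def
      proof (rule Sup_close)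
        show "\<forall>\<mu>\<in>invariant_prob (borelX X) shift. \<bar>((\<integral>x. f \<theta>' x \<partial>\<mu>) + ks_entropy \<mu> shift) - ((\<integral>x. f \<theta> x \<partial>\<mu>) + ks_entropy \<mu> shift)\<bar> \<le> \<epsilon>/2"
        proof
          fix \<mu> assume "\<mu> \<in> invariant_prob (borelX X) shift"
          then have \<mu>: "prob_space \<mu>" "sets \<mu> = sets (borelX X)" unfolding invariant_prob_def by auto
          have sp: "space \<mu> = X" using sets_eq_imp_space_eq[OF \<mu>(2)] by (simp add: space_borelX)
          have "\<bar>(\<integral>x. f \<theta>' x \<partial>\<mu>) - (\<integral>x. f \<theta> x \<partial>\<mu>)\<bar> \<le> \<epsilon>/2"
            by (rule int_close[OF \<mu>(1)]) (use measurable_cong_sets[OF \<mu>(2) refl] fm th th' B1 B2 close sp in auto)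
          then show "\<bar>((\<integral>x. f \<theta>' x \<partial>\<mu>) + ks_entropy \<mu> shift) - ((\<integral>x. f \<theta> x \<partial>\<mu>) + ks_entropy \<mu> shift)\<bar> \<le> \<epsilon>/2"
            by simp
        qed
      qed (use e in simp)
      have Fc: "\<bar>Fi \<theta>' L - Fi \<theta> L\<bar> \<le> \<epsilon>/2"
      proof -
        note LF = joining_facts[OF L[unfolded J_def] nu(2)]
        have fstm: "fst \<in> measurable L (borelX X)"
          using measurable_cong_sets[OF LF(2) refl] measurable_fst by blast
        show ?thesis unfolding Fi_def
          by (rule int_close[OF LF(1)]) (use measurable_compose[OF fstm fm] th th' B1 B2 close LF(3) in auto)
      qed
      show "\<bar>(P \<theta>' - Fi \<theta>' L) - (P \<theta> - Fi \<theta> L)\<bar> \<le> \<epsilon>" using Pc Fc by linarith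
    qed
  next
    case False
    obtain x0 where x0: "x0 \<in> X" using X(2) by blast
    then have Xs: "X = {x0}" using False by blast
    have sx: "shift x0 = x0" using shiftX[OF x0] Xs by simp
    have Pe: "P t = f t x0 + ks_entropy (return (borelX X) x0) shift" for t
      unfolding P_def by (rule singleton_pressure[OF Xs sx])
    have Fe: "Fi t L = f t x0" if "L \<in> J" for t L
    proof -
      note LF = joining_facts[OF that[unfolded J_def] nu(2)]
      have "Fi t L = (\<integral>p. f t x0 \<partial>L)"
        unfolding Fi_def by (rule Bochner_Integration.integral_cong) (use LF(3) Xs in auto)
      also have "\<dots> = f t x0" using prob_space.prob_space[OF LF(1)] by simp
      finally show ?thesis .
    qed
    show ?thesis using e by (intro exI[of _ 1]) (simp add: Pe Fe)
  qed
  have Vc: "continuous_on \<Theta> V"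
    unfolding continuous_on_iff
  proof (intro ballI allI impI)
    fix \<theta> and e :: real assume th: "\<theta> \<in> \<Theta>" and e: "e > 0"
    obtain d1 where d1: "d1 > 0" "\<forall>\<theta>'\<in>\<Theta>. dist \<theta>' \<theta> < d1 \<longrightarrow> (\<forall>L\<in>J. \<bar>Lo \<theta>' L - Lo \<theta> L\<bar> \<le> e/4)"
      using KL[OF th, of "e/4"] e by auto
    obtain d2 where d2: "d2 > 0" "\<forall>\<theta>'\<in>\<Theta>. dist \<theta>' \<theta> < d2 \<longrightarrow> (\<forall>L\<in>J. \<bar>(P \<theta>' - Fi \<theta>' L) - (P \<theta> - Fi \<theta> L)\<bar> \<le> e/4)"
      using KF[OF th, of "e/4"] e by auto
    show "\<exists>d>0. \<forall>\<theta>'\<in>\<Theta>. dist \<theta>' \<theta> < d \<longrightarrow> dist (V \<theta>') (V \<theta>) < e"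
    proof (intro exI[of _ "min d1 d2"] conjI ballI impI)
      show "min d1 d2 > 0" using d1 d2 by simp
    next
      fix \<theta>' assume th': "\<theta>' \<in> \<Theta>" and d: "dist \<theta>' \<theta> < min d1 d2"
      have "\<forall>L\<in>J. \<bar>G \<theta>' L - G \<theta> L\<bar> \<le> e/2"
      proof
        fix L assume L: "L \<in> J"
        have "\<bar>Lo \<theta>' L - Lo \<theta> L\<bar> \<le> e/4" using d1 th' d L by auto
        moreover have "\<bar>(P \<theta>' - Fi \<theta>' L) - (P \<theta> - Fi \<theta> L)\<bar> \<le> e/4" using d2 th' d L by auto
        ultimately show "\<bar>G \<theta>' L - G \<theta> L\<bar> \<le> e/2" unfolding G_def by linarith
      qed
      then have "\<bar>Inf (G \<theta>' ` J) - Inf (G \<theta> ` J)\<bar> \<le> e/2"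
        by (rule Inf_close) (use e in simp)
      then show "dist (V \<theta>') (V \<theta>) < e" unfolding VG dist_real_def using e by linarith
    qed
  qed
  obtain tm where tm: "tm \<in> \<Theta>" "\<forall>t\<in>\<Theta>. V tm \<le> V t"
    using continuous_attains_inf[OF Theta Vc] by blast
  have S: "{\<theta>\<in>\<Theta>. \<forall>\<theta>'\<in>\<Theta>. V \<theta> \<le> V \<theta>'} = {\<theta>\<in>\<Theta>. V \<theta> \<le> (\<lambda>_. V tm) \<theta>}"
    using tm by force
  have lsc: "lsc_on \<Theta> V"
    unfolding lsc_on_def
  proof
    fix a
    have "openin (top_of_set \<Theta>) (\<Theta> \<inter> V -` {a<..})"
      by (rule continuous_openin_preimage_gen[OF Vc]) simp
    moreover have "\<Theta> \<inter> V -` {a<..} = {x \<in> \<Theta>. a < V x}" by auto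
    ultimately show "openin (top_of_set \<Theta>) {x \<in> \<Theta>. a < V x}" by simp
  qed
  have ne: "{\<theta>\<in>\<Theta>. \<forall>\<theta>'\<in>\<Theta>. V \<theta> \<le> V \<theta>'} \<noteq> {}" using tm by blast
  have cl: "closed {\<theta>\<in>\<Theta>. V \<theta> \<le> (\<lambda>_. V tm) \<theta>}"
    by (rule continuous_on_closed_Collect_le[OF Vc continuous_on_const compact_imp_closed[OF Theta(1)]])
  have "compact (\<Theta> \<inter> {\<theta>\<in>\<Theta>. V \<theta> \<le> (\<lambda>_. V tm) \<theta>})"
    by (rule compact_Int_closed[OF Theta(1) cl])
  moreover have "\<Theta> \<inter> {\<theta>\<in>\<Theta>. V \<theta> \<le> (\<lambda>_. V tm) \<theta>} = {\<theta>\<in>\<Theta>. \<forall>\<theta>'\<in>\<Theta>. V \<theta> \<le> V \<theta>'}"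
    using S by blast
  ultimately have "compact {\<theta>\<in>\<Theta>. \<forall>\<theta>'\<in>\<Theta>. V \<theta> \<le> V \<theta>'}" by simp
  then show ?thesis using lsc ne unfolding V_def by blast
qed

end
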